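(* Let $C>0$ be a constant such that $\|x\|\le C\|x\|_*$ for all $x\in\mathbb{X}$. Let $f$ satisfy Assumptions (A) and (B), and let $\mathcal{D}$ and $\delta>0$ satisfy Assumption (E) below. Let $\nu>0$, $u\sim\mathcal{D}$, and define \[ \nabla f_\nu(x)=\mathbb{E}_u\Big[\frac{\delta}{\nu}\big(f(x+\nu u)-f(x)\big)u\Big],\qquad \nabla f_\nu(x;\xi)=\frac{\delta}{\nu}\big(f(x+\nu u;\xi)-f(x;\xi)\big)u . \] Then for all $x\in\mathbb{X}$ (and every realisation $\xi$): (a) $\|\nabla f_\nu(x)-\nabla f(x)\|_*\le \frac{\delta\nu C^2L}{2}\mathbb{E}_u[\|u\|_*^3]$; (b) $\mathbb{E}_u[\|\nabla f_\nu(x;\xi)\|_*^2]\le \frac{C^4L^2\delta^2\nu^2}{2}\mathbb{E}_u[\|u\|_*^6]+2\delta^2\mathbb{E}_u[\langle\nabla f(x;\xi),u\rangle^2\|u\|_*^2]$.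
   Context: $\mathbb{X}$ is a finite-dimensional real vector space with inner product $\langle\cdot,\cdot\rangle$ and a norm $\|\cdot\|$, with dual norm $\|g\|_*=\sup_{\|x\|\le1}\langle g,x\rangle$. $f(x)=\mathbb{E}_\xi[f(x;\xi)]$ for functions $f(\cdot;\xi):\mathbb{X}\to\mathbb{R}$. Assumption (A): for every $\xi$, $f(\cdot;\xi)$ is differentiable, $G$-Lipschitz and $\|\nabla f(x;\xi)-\nabla f(y;\xi)\|_*\le L\|x-y\|$ for all $x,y\in\mathbb{X}$. Assumption (B): $\mathbb{E}_\xi[\nabla f(x;\xi)]=\nabla f(x)$ for all $x$. Assumption (E): $\mathcal{D}$ is a probability distribution supported in $\mathbb{X}$ and there is $\delta>0$ such that, for $u\sim\mathcal{D}$, $\mathbb{E}_u[\langle g,u\rangle u]=g/\delta$ for all $g\in\mathbb{X}$. *)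

theory Defs
  imports "HOL-Probability.Probability"
begin

definition is_norm :: "('a::real_vector \<Rightarrow> real) \<Rightarrow> bool" where
  "is_norm nrm \<longleftrightarrow> (\<forall>x. nrm x = 0 \<longleftrightarrow> x = 0) \<and>
                    (\<forall>a x. nrm (a *\<^sub>R x) = \<bar>a\<bar> * nrm x) \<and>
                    (\<forall>x y. nrm (x + y) \<le> nrm x + nrm y)"

definition dual_norm :: "('a::real_inner \<Rightarrow> real) \<Rightarrow> 'a \<Rightarrow> real" where
  "dual_norm nrm g = Sup {g \<bullet> x | x. nrm x \<le> 1}"

definition zo_grad :: "('a::real_vector \<Rightarrow> 'b \<Rightarrow> real) \<Rightarrow> real \<Rightarrow> real \<Rightarrow> 'a \<Rightarrow> 'b \<Rightarrow> 'a \<Rightarrow> 'a" where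
  "zo_grad F \<delta> \<nu> x \<xi> u = ((\<delta> / \<nu>) * (F (x + \<nu> *\<^sub>R u) \<xi> - F x \<xi>)) *\<^sub>R u"

end

theory Submission
  imports Defs
begin

lemma nrm_basic:
  assumes n: "is_norm nrm"
  shows "nrm 0 = 0" "nrm (-x) = nrm x" "nrm x \<ge> 0" "nrm (x + y) \<le> nrm x + nrm y"
    "nrm (a *\<^sub>R x) = \<bar>a\<bar> * nrm x" "nrm (x - y) = nrm (y - x)"
proof -
  show 0: "nrm 0 = 0" using n unfolding is_norm_def by blast
  show m: "nrm (-x) = nrm x" for x using n unfolding is_norm_def
    by (metis abs_neg_one mult_1 scaleR_minus1_left)
  show "nrm (x + y) \<le> nrm x + nrm y" using n unfolding is_norm_def by blast
  show "nrm (a *\<^sub>R x) = \<bar>a\<bar> * nrm x" using n unfolding is_norm_def by blast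
  have "nrm 0 \<le> nrm x + nrm (-x)" using n unfolding is_norm_def by (metis add.right_inverse)
  then show "nrm x \<ge> 0" using 0 m by simp
  show "nrm (x - y) = nrm (y - x)" using m[of "x - y"] by simp
qed

lemma nrm_sum:
  assumes n: "is_norm nrm"
  shows "nrm (sum g S) \<le> (\<Sum>i\<in>S. nrm (g i))"
proof (induction S rule: infinite_finite_induct)
  case (insert x F)
  then show ?case using nrm_basic(4)[OF n, of "g x" "sum g F"] by simp
qed (auto simp: nrm_basic[OF n])

lemma nrm_upper:
  fixes nrm :: "'a::euclidean_space \<Rightarrow> real"
  assumes n: "is_norm nrm"
  shows "nrm x \<le> (\<Sum>b\<in>Basis. nrm b) * norm x"
proof -
  have "nrm x = nrm (\<Sum>b\<in>Basis. (x \<bullet> b) *\<^sub>R b)" by (simp add: euclidean_representation)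
  also have "\<dots> \<le> (\<Sum>b\<in>Basis. nrm ((x \<bullet> b) *\<^sub>R b))" by (rule nrm_sum[OF n])
  also have "\<dots> = (\<Sum>b\<in>Basis. \<bar>x \<bullet> b\<bar> * nrm b)" by (simp add: nrm_basic[OF n])
  also have "\<dots> \<le> (\<Sum>b\<in>Basis. norm x * nrm b)"
    by (intro sum_mono mult_right_mono) (auto simp: Basis_le_norm nrm_basic[OF n])
  finally show ?thesis by (simp add: sum_distrib_left mult.commute)
qed

lemma nrm_cont:
  fixes nrm :: "'a::euclidean_space \<Rightarrow> real"
  assumes n: "is_norm nrm"
  shows "continuous_on S nrm"
proof -
  define K where "K = (\<Sum>b\<in>Basis. nrm (b::'a))"
  have K: "K \<ge> 0" unfolding K_def by (intro sum_nonneg) (simp add: nrm_basic[OF n])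
  have "\<bar>nrm x - nrm y\<bar> \<le> K * dist x y" for x y
  proof -
    have "nrm x \<le> nrm y + nrm (x - y)" using nrm_basic(4)[OF n, of y "x - y"] by simp
    moreover have "nrm y \<le> nrm x + nrm (y - x)" using nrm_basic(4)[OF n, of x "y - x"] by simp
    moreover have "nrm (x - y) \<le> K * dist x y" unfolding K_def dist_norm by (rule nrm_upper[OF n])
    ultimately show ?thesis using nrm_basic(6)[OF n, of x y] by linarith
  qed
  show ?thesis
  proof (rule continuous_on_iff[THEN iffD2], intro ballI allI impI)
    fix x e assume e: "(0::real) < e"
    show "\<exists>d>0. \<forall>x'\<in>S. dist x' x < d \<longrightarrow> dist (nrm x') (nrm x) < e"
    proof (intro exI[of _ "e / (K + 1)"] conjI ballI impI)
      show "0 < e / (K + 1)" using e K by simp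
      fix x' assume "dist x' x < e / (K + 1)"
      then have "(K + 1) * dist x' x < e" using K by (simp add: field_simps)
      moreover have "\<bar>nrm x' - nrm x\<bar> \<le> K * dist x' x" by fact
      moreover have "K * dist x' x \<le> (K + 1) * dist x' x" by (simp add: distrib_right)
      ultimately show "dist (nrm x') (nrm x) < e" unfolding dist_real_def
        by linarith
    qed
  qed
qed

lemma nrm_lower:
  fixes nrm :: "'a::euclidean_space \<Rightarrow> real"
  assumes n: "is_norm nrm"
  obtains c where "c > 0" "\<And>x. c * norm x \<le> nrm x"
proof -
  have "sphere (0::'a) 1 \<noteq> {}" by simp
  then obtain x0 where x0: "x0 \<in> sphere (0::'a) 1" "\<forall>y\<in>sphere 0 1. nrm x0 \<le> nrm y"
    using continuous_attains_inf[OF compact_sphere _ nrm_cont[OF n]] by blast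
  have "x0 \<noteq> 0" using x0 by auto
  then have c: "nrm x0 > 0" using n nrm_basic(3)[OF n, of x0] unfolding is_norm_def
    by (metis order_le_less)
  have "nrm x0 * norm x \<le> nrm x" for x
  proof (cases "x = 0")
    case True then show ?thesis by (simp add: nrm_basic[OF n])
  next
    case False
    then have "(1 / norm x) *\<^sub>R x \<in> sphere 0 1" by (simp add: norm_divide)
    then have "nrm x0 \<le> nrm ((1 / norm x) *\<^sub>R x)" using x0 by blast
    also have "\<dots> = nrm x / norm x" by (simp add: nrm_basic[OF n])
    finally show ?thesis using False by (simp add: field_simps)
  qed
  then show ?thesis using that c by blast
qed

lemma dual_bdd:
  fixes nrm :: "'a::euclidean_space \<Rightarrow> real"
  assumes n: "is_norm nrm"
  obtains c where "c > 0" "\<And>g x. nrm x \<le> 1 \<Longrightarrow> g \<bullet> x \<le> norm g / c"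
proof -
  obtain c where c: "c > 0" "\<And>x. c * norm x \<le> nrm x" using nrm_lower[OF n] by blast
  have "g \<bullet> x \<le> norm g / c" if "nrm x \<le> 1" for g x
  proof -
    have "norm x \<le> 1 / c" using c(2)[of x] that c(1) by (simp add: field_simps)
    have "g \<bullet> x \<le> norm g * norm x" by (simp add: norm_cauchy_schwarz)
    also have "\<dots> \<le> norm g * (1 / c)" using `norm x \<le> 1 / c` by (intro mult_left_mono) simp_all
    finally show ?thesis by simp
  qed
  then show ?thesis using that c by blast
qed

lemma dual_upper:
  fixes nrm :: "'a::euclidean_space \<Rightarrow> real"
  assumes n: "is_norm nrm" and x: "nrm x \<le> 1"
  shows "g \<bullet> x \<le> dual_norm nrm g"
proof -
  obtain c where c: "c > 0" "\<And>g x. nrm x \<le> 1 \<Longrightarrow> g \<bullet> x \<le> norm g / c" using dual_bdd[OF n] by blast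
  have "bdd_above {g \<bullet> x | x. nrm x \<le> 1}" using c by (auto intro!: bdd_aboveI[of _ "norm g / c"])
  then show ?thesis unfolding dual_norm_def using x by (auto intro!: cSup_upper)
qed

lemma dual_least:
  fixes nrm :: "'a::euclidean_space \<Rightarrow> real"
  assumes n: "is_norm nrm" and B: "\<And>x. nrm x \<le> 1 \<Longrightarrow> g \<bullet> x \<le> B"
  shows "dual_norm nrm g \<le> B"
proof -
  have "nrm 0 \<le> 1" by (simp add: nrm_basic[OF n])
  then show ?thesis unfolding dual_norm_def using B by (auto intro!: cSup_least)
qed

lemma dual_ge0:
  fixes nrm :: "'a::euclidean_space \<Rightarrow> real"
  assumes n: "is_norm nrm"
  shows "dual_norm nrm g \<ge> 0"
  using dual_upper[OF n, of 0 g] by (simp add: nrm_basic[OF n])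

lemma inner_le_dual:
  fixes nrm :: "'a::euclidean_space \<Rightarrow> real"
  assumes n: "is_norm nrm"
  shows "\<bar>g \<bullet> x\<bar> \<le> dual_norm nrm g * nrm x"
proof (cases "x = 0")
  case True then show ?thesis by (simp add: nrm_basic[OF n])
next
  case False
  then have p: "nrm x > 0" using n nrm_basic(3)[OF n, of x] unfolding is_norm_def
    by (metis order_le_less)
  define y where "y = (1 / nrm x) *\<^sub>R x"
  have y: "nrm y \<le> 1" "nrm (-y) \<le> 1" using p by (simp_all add: y_def nrm_basic[OF n])
  have "g \<bullet> y \<le> dual_norm nrm g" "g \<bullet> (-y) \<le> dual_norm nrm g"
    using dual_upper[OF n y(1)] dual_upper[OF n y(2)] by auto
  then have "\<bar>g \<bullet> y\<bar> \<le> dual_norm nrm g" by simp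
  moreover have "\<bar>g \<bullet> y\<bar> = \<bar>g \<bullet> x\<bar> / nrm x" using p by (simp add: y_def)
  ultimately show ?thesis using p by (simp add: field_simps)
qed

lemma dual_triangle:
  fixes nrm :: "'a::euclidean_space \<Rightarrow> real"
  assumes n: "is_norm nrm"
  shows "dual_norm nrm (g + h) \<le> dual_norm nrm g + dual_norm nrm h"
  by (rule dual_least[OF n]) (simp add: inner_add_left add_mono dual_upper[OF n])

lemma dual_scale:
  fixes nrm :: "'a::euclidean_space \<Rightarrow> real"
  assumes n: "is_norm nrm"
  shows "dual_norm nrm (a *\<^sub>R g) \<le> \<bar>a\<bar> * dual_norm nrm g"
proof (rule dual_least[OF n])
  fix x assume x: "nrm x \<le> 1"
  have "(a *\<^sub>R g) \<bullet> x \<le> \<bar>a\<bar> * \<bar>g \<bullet> x\<bar>" by (simp add: abs_mult[symmetric])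
  also have "\<dots> \<le> \<bar>a\<bar> * (dual_norm nrm g * nrm x)" by (intro mult_left_mono inner_le_dual[OF n]) simp
  also have "\<dots> \<le> \<bar>a\<bar> * dual_norm nrm g"
    using x dual_ge0[OF n, of g] nrm_basic(3)[OF n, of x]
    by (intro mult_left_mono) (auto intro: mult_left_le)
  finally show "(a *\<^sub>R g) \<bullet> x \<le> \<bar>a\<bar> * dual_norm nrm g" .
qed

lemma dual_cont:
  fixes nrm :: "'a::euclidean_space \<Rightarrow> real"
  assumes n: "is_norm nrm"
  shows "continuous_on S (dual_norm nrm)"
proof -
  obtain c where c: "c > 0" "\<And>g x. nrm x \<le> 1 \<Longrightarrow> g \<bullet> x \<le> norm g / c" using dual_bdd[OF n] by blast
  have ub: "dual_norm nrm g \<le> norm g / c" for g by (rule dual_least[OF n c(2)])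
  have "\<bar>dual_norm nrm x - dual_norm nrm y\<bar> \<le> (1/c) * dist x y" for x y
  proof -
    have "dual_norm nrm x \<le> dual_norm nrm y + dual_norm nrm (x - y)"
      using dual_triangle[OF n, of y "x - y"] by simp
    moreover have "dual_norm nrm y \<le> dual_norm nrm x + dual_norm nrm (y - x)"
      using dual_triangle[OF n, of x "y - x"] by simp
    moreover have "dual_norm nrm (x - y) \<le> (1/c) * dist x y" "dual_norm nrm (y - x) \<le> (1/c) * dist x y"
      using ub[of "x - y"] ub[of "y - x"] by (simp_all add: dist_norm norm_minus_commute)
    ultimately show ?thesis by linarith
  qed
  show ?thesis
  proof (rule continuous_on_iff[THEN iffD2], intro ballI allI impI)
    fix x e assume e: "(0::real) < e"
    show "\<exists>d>0. \<forall>x'\<in>S. dist x' x < d \<longrightarrow> dist (dual_norm nrm x') (dual_norm nrm x) < e"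
    proof (intro exI[of _ "e * c"] conjI ballI impI)
      show "0 < e * c" using e c by simp
      fix x' assume "dist x' x < e * c"
      then have "(1/c) * dist x' x < e" using c by (simp add: field_simps)
      moreover have "\<bar>dual_norm nrm x' - dual_norm nrm x\<bar> \<le> (1/c) * dist x' x" by fact
      ultimately show "dist (dual_norm nrm x') (dual_norm nrm x) < e" unfolding dist_real_def
        by linarith
    qed
  qed
qed

lemma dual_meas:
  fixes nrm :: "'a::euclidean_space \<Rightarrow> real"
  assumes n: "is_norm nrm"
  shows "dual_norm nrm \<in> borel_measurable borel"
  by (rule borel_measurable_continuous_onI[OF dual_cont[OF n]])

lemma line_deriv:
  fixes \<phi> :: "'a::euclidean_space \<Rightarrow> real"
  assumes diff: "\<And>y. (\<phi> has_derivative (\<lambda>h. g y \<bullet> h)) (at y)"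
  shows "((\<lambda>t. \<phi> (x + t *\<^sub>R h)) has_real_derivative (g (x + t *\<^sub>R h) \<bullet> h)) (at t)"
proof -
  have l: "((\<lambda>t. x + t *\<^sub>R h) has_derivative (\<lambda>s. s *\<^sub>R h)) (at t)"
    by (auto intro!: derivative_eq_intros)
  have "((\<lambda>t. \<phi> (x + t *\<^sub>R h)) has_derivative (\<lambda>s. g (x + t *\<^sub>R h) \<bullet> (s *\<^sub>R h))) (at t)"
    using has_derivative_compose[OF l diff] by simp
  moreover have "(\<lambda>s. g (x + t *\<^sub>R h) \<bullet> (s *\<^sub>R h)) = (*) (g (x + t *\<^sub>R h) \<bullet> h)"
    by (auto simp: mult.commute)
  ultimately show ?thesis unfolding has_field_derivative_def by simp
qed

lemma taylor_bound:
  fixes nrm :: "'a::euclidean_space \<Rightarrow> real" and \<phi> :: "'a \<Rightarrow> real"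
  assumes n: "is_norm nrm"
    and diff: "\<And>y. (\<phi> has_derivative (\<lambda>h. g y \<bullet> h)) (at y)"
    and sm: "\<And>y z. dual_norm nrm (g y - g z) \<le> L * nrm (y - z)"
  shows "\<bar>\<phi> (x + h) - \<phi> x - g x \<bullet> h\<bar> \<le> L * nrm h ^ 2 / 2"
proof -
  have key: "\<bar>(g (x + t *\<^sub>R h) - g x) \<bullet> h\<bar> \<le> L * t * nrm h ^ 2" if t: "0 \<le> t" for t
  proof -
    have "\<bar>(g (x + t *\<^sub>R h) - g x) \<bullet> h\<bar> \<le> dual_norm nrm (g (x + t *\<^sub>R h) - g x) * nrm h"
      by (rule inner_le_dual[OF n])
    also have "\<dots> \<le> L * nrm (t *\<^sub>R h) * nrm h"
      using sm[of "x + t *\<^sub>R h" x] by (intro mult_right_mono) (simp_all add: nrm_basic[OF n])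
    also have "\<dots> = L * t * nrm h ^ 2" using t by (simp add: nrm_basic[OF n] power2_eq_square)
    finally show ?thesis .
  qed
  define c where "c = L * nrm h ^ 2"
  define \<psi>1 where "\<psi>1 t = \<phi> (x + t *\<^sub>R h) - t * (g x \<bullet> h) - c * t^2 / 2" for t
  define \<psi>2 where "\<psi>2 t = - \<phi> (x + t *\<^sub>R h) + t * (g x \<bullet> h) - c * t^2 / 2" for t
  have d1: "(\<psi>1 has_real_derivative (g (x + t *\<^sub>R h) \<bullet> h - g x \<bullet> h - c * t)) (at t)" for t
    unfolding \<psi>1_def using line_deriv[OF diff, of x h t]
    by (auto intro!: derivative_eq_intros)
  have d2: "(\<psi>2 has_real_derivative (- (g (x + t *\<^sub>R h) \<bullet> h) + g x \<bullet> h - c * t)) (at t)" for t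
    unfolding \<psi>2_def using line_deriv[OF diff, of x h t]
    by (auto intro!: derivative_eq_intros)
  have "\<psi>1 1 \<le> \<psi>1 0"
  proof (rule DERIV_nonpos_imp_nonincreasing[of 0 1])
    fix t :: real assume "0 \<le> t" "t \<le> 1"
    then show "\<exists>y. DERIV \<psi>1 t :> y \<and> y \<le> 0" using d1[of t] key[of t]
      by (intro exI[of _ "g (x + t *\<^sub>R h) \<bullet> h - g x \<bullet> h - c * t"])
         (auto simp: c_def inner_diff_left mult_ac)
  qed simp
  moreover have "\<psi>2 1 \<le> \<psi>2 0"
  proof (rule DERIV_nonpos_imp_nonincreasing[of 0 1])
    fix t :: real assume "0 \<le> t" "t \<le> 1"
    then show "\<exists>y. DERIV \<psi>2 t :> y \<and> y \<le> 0" using d2[of t] key[of t]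
      by (intro exI[of _ "- (g (x + t *\<^sub>R h) \<bullet> h) + g x \<bullet> h - c * t"])
         (auto simp: c_def inner_diff_left mult_ac)
  qed simp
  ultimately have "\<phi> (x + h) - \<phi> x - g x \<bullet> h \<le> c / 2" "- (\<phi> (x + h) - \<phi> x - g x \<bullet> h) \<le> c / 2"
    unfolding \<psi>1_def \<psi>2_def by simp_all
  then show ?thesis unfolding c_def abs_le_iff by linarith
qed

lemma int_abs_le:
  fixes r :: "'b \<Rightarrow> real"
  assumes M: "prob_space M" and r: "integrable M r" and b: "\<And>x. x \<in> space M \<Longrightarrow> \<bar>r x\<bar> \<le> c"
  shows "\<bar>\<integral>x. r x \<partial>M\<bar> \<le> c"
proof -
  have "(\<integral>x. r x \<partial>M) \<le> c" using b by (intro prob_space.integral_le_const[OF M r]) (auto simp: abs_le_iff)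
  moreover have "(\<integral>x. - r x \<partial>M) \<le> c" using b r
    by (intro prob_space.integral_le_const[OF M]) (auto simp: abs_le_iff)
  ultimately show ?thesis by (simp add: abs_le_iff)
qed

lemma dual_integral:
  fixes nrm :: "'a::euclidean_space \<Rightarrow> real" and v :: "'b \<Rightarrow> 'a"
  assumes n: "is_norm nrm" and v: "integrable M v"
  shows "ennreal (dual_norm nrm (\<integral>x. v x \<partial>M)) \<le> (\<integral>\<^sup>+x. ennreal (dual_norm nrm (v x)) \<partial>M)"
proof (cases "(\<integral>\<^sup>+x. ennreal (dual_norm nrm (v x)) \<partial>M) = \<infinity>")
  case True then show ?thesis by simp
next
  case False
  then obtain r where r: "(\<integral>\<^sup>+x. ennreal (dual_norm nrm (v x)) \<partial>M) = ennreal r" "r \<ge> 0"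
    by (metis ennreal_cases infinity_ennreal_def)
  have vm: "v \<in> borel_measurable M" using v by (rule borel_measurable_integrable)
  have dm: "(\<lambda>x. dual_norm nrm (v x)) \<in> borel_measurable M"
    using measurable_compose[OF vm dual_meas[OF n]] by simp
  have di: "integrable M (\<lambda>x. dual_norm nrm (v x))"
    by (rule integrableI_nn_integral_finite[OF dm _ r(1)]) (simp add: dual_ge0[OF n])
  have "dual_norm nrm (\<integral>x. v x \<partial>M) \<le> (\<integral>x. dual_norm nrm (v x) \<partial>M)"
  proof (rule dual_least[OF n])
    fix y assume y: "nrm y \<le> 1"
    have "(\<integral>x. v x \<partial>M) \<bullet> y = (\<integral>x. v x \<bullet> y \<partial>M)" using v by simp
    also have "\<dots> \<le> (\<integral>x. dual_norm nrm (v x) \<partial>M)"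
      using v di dual_upper[OF n y] by (intro integral_mono) auto
    finally show "(\<integral>x. v x \<partial>M) \<bullet> y \<le> (\<integral>x. dual_norm nrm (v x) \<partial>M)" .
  qed
  moreover have "(\<integral>\<^sup>+x. ennreal (dual_norm nrm (v x)) \<partial>M) = ennreal (\<integral>x. dual_norm nrm (v x) \<partial>M)"
    using di by (intro nn_integral_eq_integral) (auto simp: dual_ge0[OF n])
  ultimately show ?thesis by (simp add: ennreal_leI)
qed

lemma b_pt:
  fixes R B d \<delta> \<nu> s Z :: real
  assumes "\<bar>R\<bar> \<le> B" "d \<ge> 0" "\<delta> > 0" "\<nu> > 0" "Z \<ge> 0" "Z \<le> \<bar>(\<delta> / \<nu>) * (R + \<nu> * s)\<bar> * d"
  shows "Z^2 \<le> 2 * (\<delta>/\<nu>)^2 * B^2 * d^2 + 2 * \<delta>^2 * s^2 * d^2"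
proof -
  have "Z^2 \<le> (\<bar>(\<delta> / \<nu>) * (R + \<nu> * s)\<bar> * d)^2" using assms by (intro power_mono) auto
  also have "\<dots> = (\<delta>/\<nu>)^2 * (R + \<nu> * s)^2 * d^2" by (simp only: power_mult_distrib power2_abs)
  also have "\<dots> \<le> (\<delta>/\<nu>)^2 * (2 * R^2 + 2 * (\<nu> * s)^2) * d^2"
  proof -
    have "(R + \<nu> * s)^2 + (R - \<nu> * s)^2 = 2 * R^2 + 2 * (\<nu> * s)^2"
      by (simp add: power2_eq_square algebra_simps)
    moreover have "0 \<le> (R - \<nu> * s)^2" by simp
    ultimately have "(R + \<nu> * s)^2 \<le> 2 * R^2 + 2 * (\<nu> * s)^2" by linarith
    then show ?thesis by (intro mult_right_mono mult_left_mono) auto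
  qed
  also have "\<dots> \<le> (\<delta>/\<nu>)^2 * (2 * B^2 + 2 * (\<nu> * s)^2) * d^2"
  proof -
    have "R^2 \<le> B^2" using assms(1) by (metis abs_ge_zero abs_le_square_iff order.trans power2_abs abs_of_nonneg abs_le_self_iff power_mono)
    then show ?thesis by (intro mult_right_mono mult_left_mono) auto
  qed
  also have "\<dots> = 2 * (\<delta>/\<nu>)^2 * B^2 * d^2 + 2 * \<delta>^2 * s^2 * d^2"
    using assms by (simp add: field_simps power2_eq_square)
  finally show ?thesis .
qed

theorem lemma2:
  fixes nrm :: "'a::euclidean_space \<Rightarrow> real"
    and F :: "'a \<Rightarrow> 'b \<Rightarrow> real" and gF :: "'a \<Rightarrow> 'b \<Rightarrow> 'a"
    and f :: "'a \<Rightarrow> real" and gf :: "'a \<Rightarrow> 'a"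
    and \<Xi> :: "'b measure" and D :: "'a measure"
    and C G L \<delta> \<nu> :: real
  assumes norm: "is_norm nrm"
    and C_pos: "C > 0"
    and C_bound: "\<forall>x. nrm x \<le> C * dual_norm nrm x"
    \<comment> \<open>Assumption (A)\<close>
    and A_diff: "\<forall>\<xi>\<in>space \<Xi>. \<forall>x. ((\<lambda>y. F y \<xi>) has_derivative (\<lambda>h. gF x \<xi> \<bullet> h)) (at x)"
    and A_lip: "\<forall>\<xi>\<in>space \<Xi>. \<forall>x y. \<bar>F x \<xi> - F y \<xi>\<bar> \<le> G * nrm (x - y)"
    and A_smooth: "\<forall>\<xi>\<in>space \<Xi>. \<forall>x y. dual_norm nrm (gF x \<xi> - gF y \<xi>) \<le> L * nrm (x - y)"
    \<comment> \<open>f is the expectation of F(.;xi)\<close>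
    and Xi_prob: "prob_space \<Xi>"
    and F_int: "\<forall>x. integrable \<Xi> (\<lambda>\<xi>. F x \<xi>)"
    and f_def: "\<forall>x. f x = (\<integral>\<xi>. F x \<xi> \<partial>\<Xi>)"
    \<comment> \<open>Assumption (B): gf is the gradient of f and equals E[gF]\<close>
    and f_grad: "\<forall>x. (f has_derivative (\<lambda>h. gf x \<bullet> h)) (at x)"
    and gF_int: "\<forall>x. integrable \<Xi> (\<lambda>\<xi>. gF x \<xi>)"
    and B: "\<forall>x. (\<integral>\<xi>. gF x \<xi> \<partial>\<Xi>) = gf x"
    \<comment> \<open>Assumption (E)\<close>
    and D_prob: "prob_space D"
    and D_sets: "sets D = sets borel"
    and \<delta>_pos: "\<delta> > 0"
    and E: "\<forall>g. integrable D (\<lambda>u. (g \<bullet> u) *\<^sub>R u) \<and>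
                (\<integral>u. (g \<bullet> u) *\<^sub>R u \<partial>D) = g /\<^sub>R \<delta>"
    and \<nu>_pos: "\<nu> > 0"
  shows "(\<forall>x. ennreal (dual_norm nrm
              ((\<integral>u. ((\<delta> / \<nu>) * (f (x + \<nu> *\<^sub>R u) - f x)) *\<^sub>R u \<partial>D) - gf x))
            \<le> ennreal (\<delta> * \<nu> * C^2 * L / 2) * (\<integral>\<^sup>+u. ennreal (dual_norm nrm u ^ 3) \<partial>D)) \<and>
         (\<forall>x. \<forall>\<xi>\<in>space \<Xi>.
           (\<integral>\<^sup>+u. ennreal (dual_norm nrm (zo_grad F \<delta> \<nu> x \<xi> u) ^ 2) \<partial>D)
            \<le> ennreal (C^4 * L^2 * \<delta>^2 * \<nu>^2 / 2) * (\<integral>\<^sup>+u. ennreal (dual_norm nrm u ^ 6) \<partial>D)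
              + ennreal (2 * \<delta>^2) * (\<integral>\<^sup>+u. ennreal ((gF x \<xi> \<bullet> u)^2 * dual_norm nrm u ^ 2) \<partial>D))"
proof -
  interpret X: prob_space \<Xi> by (rule Xi_prob)
  interpret D: prob_space D by (rule D_prob)
  have n: "is_norm nrm" by (rule norm)
  have meas: "h \<in> borel_measurable D" if "h \<in> borel_measurable borel" for h :: "'a \<Rightarrow> real"
    using that measurable_cong_sets[OF D_sets refl] by blast
  have measv: "h \<in> borel_measurable D" if "h \<in> borel_measurable borel" for h :: "'a \<Rightarrow> 'a"
    using that measurable_cong_sets[OF D_sets refl] by blast
  have dmeas: "dual_norm nrm \<in> borel_measurable D" by (rule meas[OF dual_meas[OF n]])
  obtain \<xi>0 where \<xi>0: "\<xi>0 \<in> space \<Xi>" using X.not_empty by blast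
  have L0: "L \<ge> 0"
  proof -
    obtain b :: 'a where b: "b \<in> Basis" using nonempty_Basis by blast
    then have "b \<noteq> 0" by auto
    then have "nrm b > 0" using n nrm_basic(3)[OF n, of b] unfolding is_norm_def by (metis order_le_less)
    moreover have "0 \<le> L * nrm (b - 0)"
      using A_smooth \<xi>0 dual_ge0[OF n, of "gF b \<xi>0 - gF 0 \<xi>0"] by (meson order.trans)
    ultimately show ?thesis by (simp add: zero_le_mult_iff)
  qed
  have nC: "nrm u ^ 2 \<le> C^2 * dual_norm nrm u ^ 2" for u
  proof -
    have "nrm u ^ 2 \<le> (C * dual_norm nrm u) ^ 2"
      using C_bound nrm_basic(3)[OF n, of u] by (intro power_mono) auto
    then show ?thesis by (simp add: power_mult_distrib)
  qed
  have TF: "\<bar>F (x + h) \<xi> - F x \<xi> - gF x \<xi> \<bullet> h\<bar> \<le> L * nrm h ^ 2 / 2" if "\<xi> \<in> space \<Xi>" for x h \<xi>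
    using that A_diff A_smooth by (intro taylor_bound[OF n]) auto
  have Tf: "\<bar>f (x + h) - f x - gf x \<bullet> h\<bar> \<le> L * nrm h ^ 2 / 2" for x h
  proof -
    have "f (x + h) - f x - gf x \<bullet> h = (\<integral>\<xi>. F (x + h) \<xi> - F x \<xi> - gF x \<xi> \<bullet> h \<partial>\<Xi>)"
      using F_int gF_int f_def B[rule_format, of x, symmetric]
      by (simp add: integral_diff)
    also have "\<bar>\<dots>\<bar> \<le> L * nrm h ^ 2 / 2"
      using F_int gF_int TF by (intro int_abs_le[OF Xi_prob]) auto
    finally show ?thesis .
  qed
  have Lf: "\<bar>f y - f z\<bar> \<le> \<bar>G\<bar> * nrm (y - z)" for y z
  proof -
    have "f y - f z = (\<integral>\<xi>. F y \<xi> - F z \<xi> \<partial>\<Xi>)" using F_int f_def by (simp add: integral_diff)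
    also have "\<bar>\<dots>\<bar> \<le> \<bar>G\<bar> * nrm (y - z)"
      using F_int A_lip nrm_basic(3)[OF n, of "y - z"]
      by (intro int_abs_le[OF Xi_prob]) (auto intro: order.trans[OF _ mult_right_mono[OF abs_ge_self]])
    finally show ?thesis .
  qed
  have part_a: "ennreal (dual_norm nrm
              ((\<integral>u. ((\<delta> / \<nu>) * (f (x + \<nu> *\<^sub>R u) - f x)) *\<^sub>R u \<partial>D) - gf x))
            \<le> ennreal (\<delta> * \<nu> * C^2 * L / 2) * (\<integral>\<^sup>+u. ennreal (dual_norm nrm u ^ 3) \<partial>D)" for x
  proof -
    have fc: "continuous_on UNIV f"
      using f_grad by (intro continuous_at_imp_continuous_on ballI) (metis has_derivative_continuous)
    define v0 where "v0 u = ((\<delta> / \<nu>) * (f (x + \<nu> *\<^sub>R u) - f x)) *\<^sub>R u" for u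
    define v1 where "v1 u = (\<delta> * (gf x \<bullet> u)) *\<^sub>R u" for u
    define R where "R u = f (x + \<nu> *\<^sub>R u) - f x - gf x \<bullet> (\<nu> *\<^sub>R u)" for u
    define K where "K = (\<Sum>b\<in>Basis. nrm (b::'a))"
    have K0: "K \<ge> 0" unfolding K_def by (intro sum_nonneg) (simp add: nrm_basic[OF n])
    have sq: "integrable D (\<lambda>u. \<Sum>b\<in>Basis. ((b \<bullet> u) *\<^sub>R u) \<bullet> b)"
    proof (rule Bochner_Integration.integrable_sum)
      fix b :: 'a
      show "integrable D (\<lambda>u. ((b \<bullet> u) *\<^sub>R u) \<bullet> b)"
        using E by (intro integrable_inner_left) blast
    qed
    have sq_eq: "(\<Sum>b\<in>Basis. ((b \<bullet> u) *\<^sub>R u) \<bullet> b) = norm u ^ 2" for u :: 'a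
      by (simp add: euclidean_inner[of u u] power2_norm_eq_inner inner_commute mult.commute)
    have v0m: "v0 \<in> borel_measurable D" unfolding v0_def
      by (rule measv, rule borel_measurable_continuous_onI)
         (intro continuous_intros continuous_on_compose2[OF fc] ; simp)
    have v0i: "integrable D v0"
    proof (rule Bochner_Integration.integrable_bound[OF integrable_mult_right[OF sq, of "\<delta> * \<bar>G\<bar> * K"] v0m], rule AE_I2)
      fix u :: 'a
      have "norm (v0 u) = (\<delta> / \<nu>) * \<bar>f (x + \<nu> *\<^sub>R u) - f x\<bar> * norm u"
        unfolding v0_def using \<delta>_pos \<nu>_pos by (simp add: abs_mult)
      also have "\<dots> \<le> (\<delta> / \<nu>) * (\<bar>G\<bar> * (\<nu> * nrm u)) * norm u"
        using Lf[of "x + \<nu> *\<^sub>R u" x] \<delta>_pos \<nu>_pos by (intro mult_right_mono mult_left_mono) (auto simp: nrm_basic[OF n])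
      also have "\<dots> = \<delta> * \<bar>G\<bar> * nrm u * norm u" using \<nu>_pos by simp
      also have "\<dots> \<le> \<delta> * \<bar>G\<bar> * (K * norm u) * norm u"
        using nrm_upper[OF n, of u] \<delta>_pos unfolding K_def by (intro mult_right_mono mult_left_mono) auto
      also have "\<dots> = norm ((\<delta> * \<bar>G\<bar> * K) * (\<Sum>b\<in>Basis. ((b \<bullet> u) *\<^sub>R u) \<bullet> b))"
        unfolding sq_eq using \<delta>_pos K0 by (simp add: power2_eq_square abs_mult)
      finally show "norm (v0 u) \<le> norm ((\<delta> * \<bar>G\<bar> * K) * (\<Sum>b\<in>Basis. ((b \<bullet> u) *\<^sub>R u) \<bullet> b))" .
    qed
    have v1i: "integrable D v1" unfolding v1_def using E
      by (simp add: scaleR_scaleR[symmetric] del: scaleR_scaleR)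
    have v1int: "(\<integral>u. v1 u \<partial>D) = gf x" unfolding v1_def using E \<delta>_pos
      by (simp add: scaleR_scaleR[symmetric] del: scaleR_scaleR) (simp add: divideR_right)
    have vv: "v0 u - v1 u = ((\<delta> / \<nu>) * R u) *\<^sub>R u" for u
      unfolding v0_def v1_def R_def using \<nu>_pos by (simp add: algebra_simps)
    have "(\<integral>u. ((\<delta> / \<nu>) * (f (x + \<nu> *\<^sub>R u) - f x)) *\<^sub>R u \<partial>D) - gf x = (\<integral>u. v0 u - v1 u \<partial>D)"
    proof -
      have "(\<lambda>u. ((\<delta> / \<nu>) * (f (x + \<nu> *\<^sub>R u) - f x)) *\<^sub>R u) = v0" unfolding v0_def ..
      then show ?thesis using v0i v1i v1int by (simp add: Bochner_Integration.integral_diff)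
    qed
    then have "ennreal (dual_norm nrm ((\<integral>u. ((\<delta> / \<nu>) * (f (x + \<nu> *\<^sub>R u) - f x)) *\<^sub>R u \<partial>D) - gf x))
        \<le> (\<integral>\<^sup>+u. ennreal (dual_norm nrm (v0 u - v1 u)) \<partial>D)"
      using dual_integral[OF n, of D "\<lambda>u. v0 u - v1 u"] v0i v1i by simp
    also have "\<dots> \<le> (\<integral>\<^sup>+u. ennreal (\<delta> * \<nu> * C^2 * L / 2) * ennreal (dual_norm nrm u ^ 3) \<partial>D)"
    proof (rule nn_integral_mono)
      fix u
      define d where "d = dual_norm nrm u"
      have d0: "d \<ge> 0" unfolding d_def by (rule dual_ge0[OF n])
      have "\<bar>R u\<bar> \<le> L * nrm (\<nu> *\<^sub>R u) ^ 2 / 2" unfolding R_def by (rule Tf)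
      also have "\<dots> = L * \<nu>^2 * nrm u ^ 2 / 2" using \<nu>_pos by (simp add: nrm_basic[OF n] power_mult_distrib)
      also have "\<dots> \<le> L * \<nu>^2 * (C^2 * d^2) / 2" unfolding d_def using nC[of u] L0
        by (intro divide_right_mono mult_left_mono) auto
      finally have Rb: "\<bar>R u\<bar> \<le> L * \<nu>^2 * (C^2 * d^2) / 2" .
      have "dual_norm nrm (v0 u - v1 u) \<le> \<bar>(\<delta> / \<nu>) * R u\<bar> * d"
        unfolding vv d_def by (rule dual_scale[OF n])
      also have "\<dots> = (\<delta> / \<nu>) * \<bar>R u\<bar> * d" using \<delta>_pos \<nu>_pos by (simp add: abs_mult)
      also have "\<dots> \<le> (\<delta> / \<nu>) * (L * \<nu>^2 * (C^2 * d^2) / 2) * d"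
        using Rb d0 \<delta>_pos \<nu>_pos by (intro mult_right_mono mult_left_mono) auto
      also have "\<dots> = (\<delta> * \<nu> * C^2 * L / 2) * d ^ 3"
        using \<nu>_pos by (simp add: field_simps power2_eq_square eval_nat_numeral)
      finally have "dual_norm nrm (v0 u - v1 u) \<le> (\<delta> * \<nu> * C^2 * L / 2) * d ^ 3" .
      then have "ennreal (dual_norm nrm (v0 u - v1 u)) \<le> ennreal ((\<delta> * \<nu> * C^2 * L / 2) * d ^ 3)"
        by (rule ennreal_leI)
      also have "\<dots> = ennreal (\<delta> * \<nu> * C^2 * L / 2) * ennreal (dual_norm nrm u ^ 3)"
        using d0 \<delta>_pos \<nu>_pos L0 unfolding d_def by (intro ennreal_mult) auto
      finally show "ennreal (dual_norm nrm (v0 u - v1 u)) \<le> ennreal (\<delta> * \<nu> * C^2 * L / 2) * ennreal (dual_norm nrm u ^ 3)" .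
    qed
    also have "\<dots> = ennreal (\<delta> * \<nu> * C^2 * L / 2) * (\<integral>\<^sup>+u. ennreal (dual_norm nrm u ^ 3) \<partial>D)"
      using dmeas by (intro nn_integral_cmult) measurable
    finally show ?thesis .
  qed
  have part_b: "(\<integral>\<^sup>+u. ennreal (dual_norm nrm (zo_grad F \<delta> \<nu> x \<xi> u) ^ 2) \<partial>D)
            \<le> ennreal (C^4 * L^2 * \<delta>^2 * \<nu>^2 / 2) * (\<integral>\<^sup>+u. ennreal (dual_norm nrm u ^ 6) \<partial>D)
              + ennreal (2 * \<delta>^2) * (\<integral>\<^sup>+u. ennreal ((gF x \<xi> \<bullet> u)^2 * dual_norm nrm u ^ 2) \<partial>D)"
    if \<xi>: "\<xi> \<in> space \<Xi>" for x \<xi>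
  proof -
    define g where "g = gF x \<xi>"
    define c1 where "c1 = C^4 * L^2 * \<delta>^2 * \<nu>^2 / 2"
    have pt: "dual_norm nrm (zo_grad F \<delta> \<nu> x \<xi> u) ^ 2 \<le>
        c1 * dual_norm nrm u ^ 6 + 2 * \<delta>^2 * ((g \<bullet> u)^2 * dual_norm nrm u ^ 2)" for u
    proof -
      define d where "d = dual_norm nrm u"
      define R where "R = F (x + \<nu> *\<^sub>R u) \<xi> - F x \<xi> - g \<bullet> (\<nu> *\<^sub>R u)"
      define Bd where "Bd = L * \<nu>^2 * C^2 * d^2 / 2"
      have d0: "d \<ge> 0" unfolding d_def by (rule dual_ge0[OF n])
      have "\<bar>R\<bar> \<le> L * nrm (\<nu> *\<^sub>R u) ^ 2 / 2" unfolding R_def g_def by (rule TF[OF \<xi>])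
      also have "\<dots> = L * \<nu>^2 * nrm u ^ 2 / 2" using \<nu>_pos by (simp add: nrm_basic[OF n] power_mult_distrib)
      also have "\<dots> \<le> L * \<nu>^2 * (C^2 * d^2) / 2" unfolding d_def using nC[of u] L0
        by (intro divide_right_mono mult_left_mono) auto
      finally have R: "\<bar>R\<bar> \<le> Bd" by (simp add: Bd_def mult_ac)
      have zo: "zo_grad F \<delta> \<nu> x \<xi> u = ((\<delta> / \<nu>) * (R + \<nu> * (g \<bullet> u))) *\<^sub>R u"
        unfolding zo_grad_def R_def by simp
      have Z: "dual_norm nrm (zo_grad F \<delta> \<nu> x \<xi> u) \<le> \<bar>(\<delta> / \<nu>) * (R + \<nu> * (g \<bullet> u))\<bar> * d"
        unfolding zo d_def by (rule dual_scale[OF n])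
      have "dual_norm nrm (zo_grad F \<delta> \<nu> x \<xi> u) ^ 2 \<le> 2 * (\<delta>/\<nu>)^2 * Bd^2 * d^2 + 2 * \<delta>^2 * (g \<bullet> u)^2 * d^2"
        by (rule b_pt[OF R d0 \<delta>_pos \<nu>_pos dual_ge0[OF n] Z])
      also have "2 * (\<delta>/\<nu>)^2 * Bd^2 * d^2 = c1 * d ^ 6"
        unfolding Bd_def c1_def using \<nu>_pos by (simp add: field_simps power2_eq_square eval_nat_numeral)
      finally show ?thesis by (simp add: d_def mult_ac)
    qed
    have m1: "(\<lambda>u. ennreal (dual_norm nrm u ^ 6)) \<in> borel_measurable D" using dmeas by measurable
    have gm: "(\<lambda>u. g \<bullet> u) \<in> borel_measurable D" by (rule meas) (intro borel_measurable_continuous_onI continuous_intros)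
    have m2: "(\<lambda>u. ennreal ((g \<bullet> u)^2 * dual_norm nrm u ^ 2)) \<in> borel_measurable D"
      using dmeas gm by measurable
    have c10: "c1 \<ge> 0" unfolding c1_def by simp
    have "(\<integral>\<^sup>+u. ennreal (dual_norm nrm (zo_grad F \<delta> \<nu> x \<xi> u) ^ 2) \<partial>D)
        \<le> (\<integral>\<^sup>+u. ennreal c1 * ennreal (dual_norm nrm u ^ 6) + ennreal (2 * \<delta>^2) * ennreal ((g \<bullet> u)^2 * dual_norm nrm u ^ 2) \<partial>D)"
    proof (rule nn_integral_mono)
      fix u
      have "ennreal (dual_norm nrm (zo_grad F \<delta> \<nu> x \<xi> u) ^ 2) \<le> ennreal (c1 * dual_norm nrm u ^ 6 + 2 * \<delta>^2 * ((g \<bullet> u)^2 * dual_norm nrm u ^ 2))"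
        by (rule ennreal_leI[OF pt])
      also have "\<dots> = ennreal c1 * ennreal (dual_norm nrm u ^ 6) + ennreal (2 * \<delta>^2) * ennreal ((g \<bullet> u)^2 * dual_norm nrm u ^ 2)"
        using c10 dual_ge0[OF n, of u] by (simp add: ennreal_plus ennreal_mult)
      finally show "ennreal (dual_norm nrm (zo_grad F \<delta> \<nu> x \<xi> u) ^ 2) \<le> ennreal c1 * ennreal (dual_norm nrm u ^ 6) + ennreal (2 * \<delta>^2) * ennreal ((g \<bullet> u)^2 * dual_norm nrm u ^ 2)" .
    qed
    also have "\<dots> = ennreal c1 * (\<integral>\<^sup>+u. ennreal (dual_norm nrm u ^ 6) \<partial>D)
              + ennreal (2 * \<delta>^2) * (\<integral>\<^sup>+u. ennreal ((g \<bullet> u)^2 * dual_norm nrm u ^ 2) \<partial>D)"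
      using m1 m2 by (simp add: nn_integral_add nn_integral_cmult)
    finally show ?thesis unfolding c1_def g_def .
  qed
  show ?thesis using part_a part_b by blast
qed

end
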